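(* Let $X\sim N(\mu,\sigma^2)$ and $Y\sim N(\theta,\sigma^2)$ be independent, $\sigma>0$, and $\tau\ge1$. Set $\eta=E_{(0,0)}\big[(X^2-\sigma^2)(Y^2-\sigma^2)\mathbb 1(X^2\vee Y^2>\sigma^2\tau)\big]$, the expectation taken under $\mu=\theta=0$. Then $\eta=-4\sigma^4\tau\,\phi^2(\tau^{1/2})$, and $$\Big|E\big[(X^2-\sigma^2)(Y^2-\sigma^2)\mathbb 1(X^2\vee Y^2>\sigma^2\tau)\big]-\eta-\mu^2\theta^2\Big|\le\min\{\mu^2,3\sigma^2\tau\}\min\{\theta^2,3\sigma^2\tau\}+2\sigma^2\tau^{1/2}\phi(\tau^{1/2})\min\{\mu^2,3\sigma^2\tau\}+2\sigma^2\tau^{1/2}\phi(\tau^{1/2})\min\{\theta^2,3\sigma^2\tau\}.$$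
   Context: $\phi$ denotes the standard normal density; $X^2\vee Y^2=\max\{X^2,Y^2\}$. *)

theory Defs
  imports "HOL-Probability.Probability"
begin

definition prod_trunc :: "real \<Rightarrow> real \<Rightarrow> real \<Rightarrow> real \<Rightarrow> real" where
  "prod_trunc \<sigma> \<tau> x y =
     (x\<^sup>2 - \<sigma>\<^sup>2) * (y\<^sup>2 - \<sigma>\<^sup>2) * (if max (x\<^sup>2) (y\<^sup>2) > \<sigma>\<^sup>2 * \<tau> then 1 else 0)"

definition eta :: "real \<Rightarrow> real \<Rightarrow> real" where
  "eta \<sigma> \<tau> = (\<integral>z. prod_trunc \<sigma> \<tau> (fst z) (snd z) *
       normal_density 0 \<sigma> (fst z) * normal_density 0 \<sigma> (snd z) \<partial>(lborel \<Otimes>\<^sub>M lborel))"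

end

theory Submission
  imports Defs
begin


definition ph :: "real \<Rightarrow> real" where "ph x = exp (-x\<^sup>2/2) / sqrt (2*pi)"

lemma std_ph: "std_normal_density x = ph x"
  by (simp add: std_normal_density_def ph_def)

lemma ph_deriv: "(ph has_real_derivative (- x * ph x)) (at x)"
  unfolding ph_def
  by (auto intro!: derivative_eq_intros simp: field_simps)

definition FF :: "real \<Rightarrow> real \<Rightarrow> real" where
  "FF a s = (a + s) * ph (a - s) + (a - s) * ph (a + s)"

lemma ph_chain: "(g has_real_derivative g') (at x) \<Longrightarrow> ((\<lambda>x. ph (g x)) has_real_derivative (- g x * ph (g x) * g')) (at x)"
  using DERIV_chain2[OF ph_deriv] by simp

lemma FF_even: "FF a (-s) = FF a s"
  unfolding FF_def by (simp add: algebra_simps)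

lemma FF_deriv: "(FF a has_real_derivative ((1 + a\<^sup>2 - s\<^sup>2) * (ph (a - s) - ph (a + s)))) (at s)"
proof -
  have d1: "((\<lambda>s. ph (a - s)) has_real_derivative (a - s) * ph (a - s)) (at s)"
  proof -
    have h: "((\<lambda>s. a - s) has_real_derivative -1) (at s)" by (auto intro!: derivative_eq_intros)
    show ?thesis by (rule DERIV_cong[OF ph_chain[OF h]]) (simp add: algebra_simps)
  qed
  have d2: "((\<lambda>s. ph (a + s)) has_real_derivative (-(a + s)) * ph (a + s)) (at s)"
  proof -
    have h: "((\<lambda>s. a + s) has_real_derivative 1) (at s)" by (auto intro!: derivative_eq_intros)
    show ?thesis by (rule DERIV_cong[OF ph_chain[OF h]]) (simp add: algebra_simps)
  qed
  have "FF a = (\<lambda>s. (a + s) * ph (a - s) + (a - s) * ph (a + s))" by (simp add: FF_def fun_eq_iff)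
  moreover have "((\<lambda>s. (a + s) * ph (a - s) + (a - s) * ph (a + s)) has_real_derivative
     ((a + s) * ((a - s) * ph (a - s)) + 1 * ph (a - s) + ((a - s) * ((-(a + s)) * ph (a + s)) + (-1) * ph (a + s)))) (at s)"
  proof (rule DERIV_add)
    show "((\<lambda>s. (a + s) * ph (a - s)) has_real_derivative (a + s) * ((a - s) * ph (a - s)) + 1 * ph (a - s)) (at s)"
      by (rule DERIV_mult'[OF _ d1]) (auto intro!: derivative_eq_intros)
    show "((\<lambda>s. (a - s) * ph (a + s)) has_real_derivative (a - s) * ((-(a + s)) * ph (a + s)) + (-1) * ph (a + s)) (at s)"
      by (rule DERIV_mult'[OF _ d2]) (auto intro!: derivative_eq_intros)
  qed
  ultimately show ?thesis by (simp add: algebra_simps power2_eq_square)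
qed

lemma ph_mono: "\<bar>x\<bar> \<le> \<bar>y\<bar> \<Longrightarrow> ph y \<le> ph x"
  unfolding ph_def
  by (auto intro!: divide_right_mono simp: abs_le_square_iff)

lemma D_nonneg: "0 \<le> a \<Longrightarrow> 0 \<le> s \<Longrightarrow> ph (a + s) \<le> ph (a - s)"
  by (rule ph_mono) simp

lemma sinh_conv: fixes s a :: real assumes "0 \<le> s" "s \<le> 1" "0 \<le> a"
  shows "exp (s*a) - exp (-(s*a)) \<le> s * (exp a - exp (-a))"
proof -
  have cv: "convex_on {0..} (\<lambda>x::real. exp x - exp (-x))"
  proof (rule convex_on_realI[where f'="\<lambda>x. exp x + exp (-x)"])
    show "connected {0::real..}" by simp
    fix x :: real assume "x \<in> {0..}"
    show "((\<lambda>x. exp x - exp (- x)) has_real_derivative exp x + exp (- x)) (at x)"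
      by (auto intro!: derivative_eq_intros)
  next
    fix x y :: real assume "x \<in> {0..}" "y \<in> {0..}" "x \<le> y"
    then have "cosh x \<le> cosh y" by (simp add: cosh_real_nonneg_le_iff)
    then show "exp x + exp (- x) \<le> exp y + exp (- y)" by (simp add: cosh_def)
  qed
  have "exp ((1-s)*0 + s*a) - exp (-((1-s)*0 + s*a)) \<le> (1-s)*(exp 0 - exp (-0)) + s*(exp a - exp (-a))"
    using convex_onD[OF cv, where t=s and x="0::real" and y=a] assms by simp
  then show ?thesis by simp
qed

lemma D_upper: fixes s a :: real assumes "0 \<le> s" "s \<le> 1" "0 \<le> a"
  shows "ph (a - s) - ph (a + s) \<le> s * exp (a - a\<^sup>2/2) / sqrt (2*pi)"
proof -
  have "-(a-s)\<^sup>2/2 = -a\<^sup>2/2 + -s\<^sup>2/2 + s*a" by (simp add: power2_eq_square field_simps)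
  then have e1: "exp (-(a-s)\<^sup>2/2) = exp (-a\<^sup>2/2) * exp (-s\<^sup>2/2) * exp (s*a)"
    by (simp only: exp_add)
  have "-(a+s)\<^sup>2/2 = -a\<^sup>2/2 + -s\<^sup>2/2 + -(s*a)" by (simp add: power2_eq_square field_simps)
  then have e2: "exp (-(a+s)\<^sup>2/2) = exp (-a\<^sup>2/2) * exp (-s\<^sup>2/2) * exp (-(s*a))"
    by (simp only: exp_add)
  have "exp (-(a-s)\<^sup>2/2) - exp (-(a+s)\<^sup>2/2) = exp (-a\<^sup>2/2) * exp (-s\<^sup>2/2) * (exp (s*a) - exp (-(s*a)))"
    unfolding e1 e2 by (simp add: algebra_simps)
  also have "\<dots> \<le> exp (-a\<^sup>2/2) * 1 * (s * (exp a - exp (-a)))"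
  proof (intro mult_mono)
    show "exp (- s\<^sup>2 / 2) \<le> 1" by simp
    show "exp (s * a) - exp (- (s * a)) \<le> s * (exp a - exp (- a))" using sinh_conv assms by simp
    show "0 \<le> exp (s * a) - exp (- (s * a))" using assms by simp
  qed auto
  also have "\<dots> \<le> exp (-a\<^sup>2/2) * (s * exp a)"
  proof -
    have "s * (exp a - exp (-a)) \<le> s * exp a" using assms by (intro mult_left_mono) auto
    then show ?thesis by simp
  qed
  also have "\<dots> = s * exp (a - a\<^sup>2/2)"
  proof -
    have "exp (-a\<^sup>2/2) * exp a = exp (-a\<^sup>2/2 + a)" by (rule mult_exp_exp)
    moreover have "-a\<^sup>2/2 + a = a - a\<^sup>2/2" by simp
    ultimately show ?thesis by simp
  qed
  finally show ?thesis unfolding ph_def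
    by (simp add: diff_divide_distrib[symmetric] divide_right_mono)
qed

lemma sqrt2pi: "5/2 \<le> sqrt (2*pi)" "sqrt (2*pi) \<le> 13/5"
proof -
  have "(5/2)\<^sup>2 \<le> 2*pi" using pi_approx by (simp add: power2_eq_square)
  then show "5/2 \<le> sqrt (2*pi)" by (rule real_le_rsqrt)
  have "2*pi \<le> (13/5)\<^sup>2" using pi_approx by (simp add: power2_eq_square)
  then have "sqrt (2*pi) \<le> sqrt ((13/5)\<^sup>2)" by (rule real_sqrt_le_mono)
  then show "sqrt (2*pi) \<le> 13/5" by simp
qed

lemma exp_half: "exp (1/2::real) \<le> 33/20"
proof -
  have "exp (1::real) \<le> 33/20 * (33/20)" using e_approx_32 unfolding abs_le_iff by simp
  moreover have "exp (1::real) = exp (1/2) * exp (1/2)" by (simp add: mult_exp_exp)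
  ultimately have "exp (1/2::real) * exp (1/2) \<le> 33/20 * (33/20)" by simp
  then have "(exp (1/2::real))\<^sup>2 \<le> (33/20)\<^sup>2" by (simp add: power2_eq_square)
  then show ?thesis by (rule power2_le_imp_le) simp
qed

lemma key_poly: assumes "1 \<le> a"
  shows "(1 + a\<^sup>2) * exp (a - a\<^sup>2/2) \<le> 11/5 * sqrt (2*pi)"
proof -
  define u where "u = a - 1"
  have "a - a\<^sup>2/2 + u\<^sup>2/2 = 1/2" by (simp add: u_def power2_eq_square field_simps)
  then have ea: "exp (a - a\<^sup>2/2) * exp (u\<^sup>2/2) = exp (1/2)"
    by (metis exp_add)
  have t: "1 + u\<^sup>2/2 + (u\<^sup>2/2)\<^sup>2/2 \<le> exp (u\<^sup>2/2)"
    by (rule exp_lower_Taylor_quadratic) simp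
  have poly: "(1 + a\<^sup>2) * (33/20) \<le> 11/2 * (1 + u\<^sup>2/2 + (u\<^sup>2/2)\<^sup>2/2)"
  proof -
    have au: "a = u + 1" by (simp add: u_def)
    have h1: "0 \<le> (u*u - 1)*(u*u - 1)" "0 \<le> (u - 2/3)*(u - 2/3)" by simp_all
    have e1: "(u*u - 1)*(u*u - 1) = u*u*(u*u) - 2*(u*u) + 1" by (simp add: algebra_simps)
    have e2: "(u - 2/3)*(u - 2/3) = u*u - 4/3*u + 4/9" by (simp add: algebra_simps)
    have e3: "(1 + a\<^sup>2) * (33/20) = 33/10 + 33/10*u + 33/20*(u*u)" by (simp add: au power2_eq_square algebra_simps)
    have e4: "11/2 * (1 + u\<^sup>2/2 + (u\<^sup>2/2)\<^sup>2/2) = 11/2 + 11/4*(u*u) + 11/16*(u*u*(u*u))"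
      by (simp add: power2_eq_square algebra_simps)
    show ?thesis unfolding e3 e4 using h1 unfolding e1 e2 by linarith
  qed
  have "(1 + a\<^sup>2) * exp (a - a\<^sup>2/2) * exp (u\<^sup>2/2) = (1 + a\<^sup>2) * exp (1/2)"
    using ea by (simp add: mult.assoc)
  also have "\<dots> \<le> (1 + a\<^sup>2) * (33/20)" using exp_half by (intro mult_left_mono) auto
  also have "\<dots> \<le> 11/2 * exp (u\<^sup>2/2)" using poly mult_left_mono[OF t, of "11/2"] by linarith
  also have "\<dots> \<le> 11/5 * sqrt (2*pi) * exp (u\<^sup>2/2)" using sqrt2pi by (intro mult_right_mono) auto
  finally show ?thesis by simp
qed




lemma FF_mono_up: assumes "0 \<le> a" "0 \<le> m" "m\<^sup>2 \<le> 1 + a\<^sup>2"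
  shows "FF a 0 \<le> FF a m"
proof (rule DERIV_nonneg_imp_increasing_open[OF assms(2)])
  fix x assume x: "0 < x" "x < m"
  have x2: "x\<^sup>2 \<le> m\<^sup>2" using x by (intro power_mono) auto
  have "0 \<le> (1 + a\<^sup>2 - x\<^sup>2) * (ph (a - x) - ph (a + x))"
  proof (rule mult_nonneg_nonneg)
    show "0 \<le> 1 + a\<^sup>2 - x\<^sup>2" using x2 assms by linarith
    show "0 \<le> ph (a - x) - ph (a + x)" using D_nonneg[of a x] x assms by linarith
  qed
  then show "\<exists>y. DERIV (FF a) x :> y \<and> 0 \<le> y" using FF_deriv by blast
next
  show "continuous_on {0..m} (FF a)"
    using FF_deriv by (meson DERIV_isCont continuous_at_imp_continuous_on)
qed

lemma FF_up_bound: assumes "1 \<le> a" "0 \<le> m" "m \<le> 1"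
  shows "FF a m - FF a 0 \<le> 11/10 * m\<^sup>2"
proof -
  let ?G = "\<lambda>s. 11/10 * s\<^sup>2 - FF a s"
  have "?G 0 \<le> ?G m"
  proof (rule DERIV_nonneg_imp_increasing_open[OF assms(2)])
    fix x assume x: "0 < x" "x < m"
    have D0: "0 \<le> ph (a - x) - ph (a + x)" using D_nonneg[of a x] x assms by auto
    have "(1 + a\<^sup>2 - x\<^sup>2) * (ph (a - x) - ph (a + x)) \<le> (1 + a\<^sup>2) * (ph (a - x) - ph (a + x))"
      using D0 by (intro mult_right_mono) auto
    also have "\<dots> \<le> (1 + a\<^sup>2) * (x * exp (a - a\<^sup>2/2) / sqrt (2*pi))"
      using D_upper[of x a] x assms by (intro mult_left_mono) auto
    also have "\<dots> = x * ((1 + a\<^sup>2) * exp (a - a\<^sup>2/2)) / sqrt (2*pi)" by simp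
    also have "\<dots> \<le> x * (11/5 * sqrt (2*pi)) / sqrt (2*pi)"
      using key_poly[OF assms(1)] x by (intro divide_right_mono mult_left_mono) auto
    also have "\<dots> = 11/5 * x" by simp
    finally have "0 \<le> 11/10 * (2 * x) - (1 + a\<^sup>2 - x\<^sup>2) * (ph (a - x) - ph (a + x))" by simp
    moreover have "DERIV ?G x :> 11/10 * (2 * x) - (1 + a\<^sup>2 - x\<^sup>2) * (ph (a - x) - ph (a + x))"
      by (intro DERIV_diff DERIV_cmult FF_deriv) (auto intro!: derivative_eq_intros)
    ultimately show "\<exists>y. DERIV ?G x :> y \<and> 0 \<le> y" by blast
  next
    show "continuous_on {0..m} ?G"
      using FF_deriv by (intro continuous_intros) (meson DERIV_isCont continuous_at_imp_continuous_on)
  qed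
  then show ?thesis by simp
qed

lemma FF0: assumes "0 \<le> a" shows "FF a 0 = 2 * a * ph a" "0 \<le> FF a 0" "FF a 0 \<le> 1"
proof -
  show e: "FF a 0 = 2 * a * ph a" by (simp add: FF_def)
  show "0 \<le> FF a 0" using assms by (simp add: e ph_def)
  have "0 \<le> (a-1)\<^sup>2" by simp
  moreover have "(a-1)\<^sup>2 = a\<^sup>2 - 2*a + 1" by (simp add: power2_eq_square algebra_simps)
  ultimately have "a \<le> 1 + a\<^sup>2/2" by linarith
  also have "\<dots> \<le> exp (a\<^sup>2/2)" using exp_ge_add_one_self by simp
  finally have "a * exp (-a\<^sup>2/2) \<le> 1" by (simp add: exp_minus field_simps)
  then have "2 * a * ph a \<le> 2 / sqrt (2*pi)" unfolding ph_def by (simp add: divide_right_mono)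
  also have "\<dots> \<le> 1" using sqrt2pi by simp
  finally show "FF a 0 \<le> 1" using e by simp
qed

lemma main_bound:
  assumes a: "1 \<le> a" and P: "0 \<le> P" "P \<le> 1" "m\<^sup>2 \<le> 1 \<Longrightarrow> 1/10 \<le> P"
    and G: "G = m\<^sup>2 * P - FF a m" "-1 \<le> G" "G \<le> a\<^sup>2 - 1"
  shows "\<bar>G + FF a 0\<bar> \<le> min (m\<^sup>2) (3 * a\<^sup>2)"
proof -
  have f0: "0 \<le> FF a 0" "FF a 0 \<le> 1" using FF0 a by auto
  have Fm: "FF a m = FF a \<bar>m\<bar>" by (cases "m \<ge> 0") (auto simp: FF_even[of a m, symmetric])
  have m2: "m\<^sup>2 = \<bar>m\<bar>\<^sup>2" by simp
  have up: "G + FF a 0 \<le> m\<^sup>2"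
  proof (cases "m\<^sup>2 \<le> a\<^sup>2")
    case True
    then have "FF a 0 \<le> FF a \<bar>m\<bar>" using a by (intro FF_mono_up) auto
    moreover have "m\<^sup>2 * P \<le> m\<^sup>2" using P by (intro mult_left_le) auto
    ultimately show ?thesis using G Fm by linarith
  next
    case False then show ?thesis using G f0 by linarith
  qed
  have lo: "- m\<^sup>2 \<le> G + FF a 0"
  proof (cases "m\<^sup>2 \<le> 1")
    case True
    then have "\<bar>m\<bar> \<le> 1" by (simp add: abs_square_le_1)
    then have "FF a \<bar>m\<bar> - FF a 0 \<le> 11/10 * m\<^sup>2" using FF_up_bound[of a "\<bar>m\<bar>"] a by simp
    moreover have "1/10 * m\<^sup>2 \<le> P * m\<^sup>2" using P True by (intro mult_right_mono) auto
    ultimately show ?thesis using G Fm by (simp add: algebra_simps)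
  next
    case False then show ?thesis using G f0 by linarith
  qed
  have "1 \<le> a\<^sup>2" using a by (simp add: one_le_power)
  then show ?thesis using up lo G f0 by (simp add: abs_le_iff)
qed




lemma second_moment:
  assumes s: "0 < \<sigma>"
  shows "has_bochner_integral lborel (\<lambda>x. normal_density \<mu> \<sigma> x * (x\<^sup>2 - \<sigma>\<^sup>2)) (\<mu>\<^sup>2)"
proof -
  let ?n = "normal_density \<mu> \<sigma>"
  have h1: "has_bochner_integral lborel (\<lambda>x. ?n x * (x - \<mu>) ^ (2 * 1)) (\<sigma>\<^sup>2)"
    using normal_moment_even[OF s, where k=1 and \<mu>=\<mu>] by (simp add: power2_eq_square)
  have h2: "has_bochner_integral lborel (\<lambda>x. ?n x * (x - \<mu>) ^ (2 * 0 + 1)) 0"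
    using normal_moment_odd[OF s, where k=0 and \<mu>=\<mu>] by simp
  have h3: "has_bochner_integral lborel ?n 1"
    using normal_moment_even[OF s, where k=0 and \<mu>=\<mu>] by simp
  have "has_bochner_integral lborel (\<lambda>x. ?n x * (x - \<mu>) ^ (2 * 1) + (2*\<mu>) * (?n x * (x - \<mu>) ^ (2 * 0 + 1)) + (\<mu>\<^sup>2 - \<sigma>\<^sup>2) * ?n x)
     (\<sigma>\<^sup>2 + (2*\<mu>) * 0 + (\<mu>\<^sup>2 - \<sigma>\<^sup>2) * 1)"
    by (intro has_bochner_integral_add has_bochner_integral_mult_right h1 h2 h3)
  then show ?thesis
    by (rule has_bochner_integral_cong[THEN iffD1, rotated 3]) (auto simp: power2_eq_square algebra_simps)
qed

definition HH :: "real \<Rightarrow> real \<Rightarrow> real \<Rightarrow> real" where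
  "HH \<sigma> \<tau> x = (x\<^sup>2 - \<sigma>\<^sup>2) * (if x\<^sup>2 \<le> \<sigma>\<^sup>2 * \<tau> then 1 else 0)"

lemma HH_ind: assumes "0 < \<sigma>" "0 \<le> \<tau>"
  shows "HH \<sigma> \<tau> x = indicator {-(\<sigma> * sqrt \<tau>)..\<sigma> * sqrt \<tau>} x * (x\<^sup>2 - \<sigma>\<^sup>2)"
proof -
  have "\<sigma>\<^sup>2 * \<tau> = (\<sigma> * sqrt \<tau>)\<^sup>2" using assms by (simp add: power_mult_distrib)
  moreover have "0 \<le> \<sigma> * sqrt \<tau>" using assms by simp
  ultimately have "x\<^sup>2 \<le> \<sigma>\<^sup>2 * \<tau> \<longleftrightarrow> x \<in> {-(\<sigma> * sqrt \<tau>)..\<sigma> * sqrt \<tau>}"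
    by (auto simp: abs_le_square_iff[symmetric] abs_le_iff)
  then show ?thesis by (simp add: HH_def indicator_def)
qed

lemma nd_deriv: assumes "0 < \<sigma>"
  shows "(normal_density \<mu> \<sigma> has_real_derivative (normal_density \<mu> \<sigma> x * (-(x - \<mu>) / \<sigma>\<^sup>2))) (at x)"
proof -
  define c where "c = 1 / sqrt (2 * pi * \<sigma>\<^sup>2)"
  have nd: "normal_density \<mu> \<sigma> = (\<lambda>x. c * exp (-(x - \<mu>)\<^sup>2/ (2 * \<sigma>\<^sup>2)))"
    by (simp add: normal_density_def c_def fun_eq_iff)
  have "((\<lambda>x. c * exp (-(x - \<mu>)\<^sup>2/ (2 * \<sigma>\<^sup>2))) has_real_derivative
      c * (exp (-(x - \<mu>)\<^sup>2/ (2 * \<sigma>\<^sup>2)) * (-(x - \<mu>) / \<sigma>\<^sup>2))) (at x)"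
    using assms by (auto intro!: derivative_eq_intros simp: field_simps power2_eq_square)
  then show ?thesis unfolding nd by (simp add: mult.assoc)
qed

lemma FTC_part: assumes s: "0 < \<sigma>" and "0 \<le> A"
  shows "(\<integral>x. indicator {-A..A} x * ((x\<^sup>2 - \<sigma>\<^sup>2 - \<mu>\<^sup>2) * normal_density \<mu> \<sigma> x) \<partial>lborel)
     = - \<sigma>\<^sup>2 * (A + \<mu>) * normal_density \<mu> \<sigma> A + \<sigma>\<^sup>2 * (-A + \<mu>) * normal_density \<mu> \<sigma> (-A)"
proof -
  let ?n = "normal_density \<mu> \<sigma>"
  let ?F = "\<lambda>x. - \<sigma>\<^sup>2 * (x + \<mu>) * ?n x"
  have "(\<integral>x. indicator {-A..A} x *\<^sub>R ((x\<^sup>2 - \<sigma>\<^sup>2 - \<mu>\<^sup>2) * ?n x) \<partial>lborel) = ?F A - ?F (-A)"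
  proof (rule integral_FTC_atLeastAtMost)
    show "- A \<le> A" using assms by simp
    fix x :: real
    have "(?F has_real_derivative (- \<sigma>\<^sup>2 * (x + \<mu>) * (?n x * (-(x - \<mu>) / \<sigma>\<^sup>2)) + (- \<sigma>\<^sup>2 * 1) * ?n x)) (at x)"
      by (intro DERIV_mult' nd_deriv s) (auto intro!: derivative_eq_intros)
    moreover have "- \<sigma>\<^sup>2 * (x + \<mu>) * (?n x * (-(x - \<mu>) / \<sigma>\<^sup>2)) + (- \<sigma>\<^sup>2 * 1) * ?n x = (x\<^sup>2 - \<sigma>\<^sup>2 - \<mu>\<^sup>2) * ?n x"
      using s by (simp add: field_simps power2_eq_square)
    ultimately have "(?F has_real_derivative (x\<^sup>2 - \<sigma>\<^sup>2 - \<mu>\<^sup>2) * ?n x) (at x)" by simp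
    then show "(?F has_vector_derivative (x\<^sup>2 - \<sigma>\<^sup>2 - \<mu>\<^sup>2) * ?n x) (at x within {-A..A})"
      by (simp add: has_real_derivative_iff_has_vector_derivative[symmetric] has_field_derivative_at_within)
  next
    show "continuous_on {-A..A} (\<lambda>x. (x\<^sup>2 - \<sigma>\<^sup>2 - \<mu>\<^sup>2) * ?n x)"
      unfolding normal_density_def using s by (intro continuous_intros) auto
  qed
  then show ?thesis by simp
qed

lemma nd_scale: assumes s: "0 < \<sigma>"
  shows "normal_density \<mu> \<sigma> (\<sigma> * a) = ph (a - \<mu>/\<sigma>) / \<sigma>"
    "normal_density \<mu> \<sigma> (-(\<sigma> * a)) = ph (a + \<mu>/\<sigma>) / \<sigma>"
proof -
  have sq: "sqrt (2 * pi * \<sigma>\<^sup>2) = sqrt (2*pi) * \<sigma>" using s by (simp add: real_sqrt_mult)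
  have e1: "-(\<sigma> * a - \<mu>)\<^sup>2 / (2 * \<sigma>\<^sup>2) = -(a - \<mu>/\<sigma>)\<^sup>2/2"
    using s by (simp add: field_simps power2_eq_square)
  have e2: "-(-(\<sigma> * a) - \<mu>)\<^sup>2 / (2 * \<sigma>\<^sup>2) = -(a + \<mu>/\<sigma>)\<^sup>2/2"
    using s by (simp add: field_simps power2_eq_square)
  show "normal_density \<mu> \<sigma> (\<sigma> * a) = ph (a - \<mu>/\<sigma>) / \<sigma>"
    unfolding normal_density_def ph_def sq e1 by simp
  show "normal_density \<mu> \<sigma> (-(\<sigma> * a)) = ph (a + \<mu>/\<sigma>) / \<sigma>"
    unfolding normal_density_def ph_def sq e2 by simp
qed

lemma exp2: "exp (2::real) \<le> 37/5"
proof -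
  have "exp (1::real) \<le> 68/25" using e_approx_32 unfolding abs_le_iff by simp
  then have "exp (1::real) * exp 1 \<le> 68/25 * (68/25)" by (intro mult_mono) auto
  then show ?thesis by (simp add: mult_exp_exp)
qed

lemma trunc_int:
  fixes \<mu> \<sigma> \<tau> :: real
  assumes s: "0 < \<sigma>" and t: "1 \<le> \<tau>"
  shows "integrable lborel (\<lambda>x. normal_density \<mu> \<sigma> x * HH \<sigma> \<tau> x)"
    and "\<exists>P. 0 \<le> P \<and> P \<le> 1 \<and> (\<mu>\<^sup>2 \<le> \<sigma>\<^sup>2 \<longrightarrow> 1/10 \<le> P) \<and>
          (\<integral>x. normal_density \<mu> \<sigma> x * HH \<sigma> \<tau> x \<partial>lborel) = \<sigma>\<^sup>2 * ((\<mu>/\<sigma>)\<^sup>2 * P - FF (sqrt \<tau>) (\<mu>/\<sigma>))"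
    and "- \<sigma>\<^sup>2 \<le> (\<integral>x. normal_density \<mu> \<sigma> x * HH \<sigma> \<tau> x \<partial>lborel)"
    and "(\<integral>x. normal_density \<mu> \<sigma> x * HH \<sigma> \<tau> x \<partial>lborel) \<le> \<sigma>\<^sup>2 * (\<tau> - 1)"
proof -
  let ?n = "normal_density \<mu> \<sigma>"
  define a where "a = sqrt \<tau>"
  define A where "A = \<sigma> * a"
  have a1: "1 \<le> a" using t by (simp add: a_def)
  have A0: "0 \<le> A" "\<sigma> \<le> A" using a1 s by (simp_all add: A_def)
  have int1: "integrable lborel (\<lambda>x. ?n x * (x\<^sup>2 - \<sigma>\<^sup>2))"
    using integrable.intros[OF second_moment[OF s, of \<mu>]] .
  have intn: "integrable lborel ?n" using s by simp
  have eqH: "?n x * HH \<sigma> \<tau> x = indicator {-A..A} x * (?n x * (x\<^sup>2 - \<sigma>\<^sup>2))" for x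
    using HH_ind[OF s, of \<tau> x] t by (simp add: A_def a_def)
  have intH: "integrable lborel (\<lambda>x. ?n x * HH \<sigma> \<tau> x)"
    unfolding eqH using integrable_mult_indicator[OF _ int1, of "{-A..A}"] by simp
  then show "integrable lborel (\<lambda>x. ?n x * HH \<sigma> \<tau> x)" .
  define P where "P = (\<integral>x. indicator {-A..A} x * ?n x \<partial>lborel)"
  have intP: "integrable lborel (\<lambda>x. indicator {-A..A} x * ?n x)"
    using integrable_mult_indicator[OF _ intn, of "{-A..A}"] by simp
  have int2: "integrable lborel (\<lambda>x. (x\<^sup>2 - \<sigma>\<^sup>2 - \<mu>\<^sup>2) * ?n x)"
  proof -
    have "integrable lborel (\<lambda>x. ?n x * (x\<^sup>2 - \<sigma>\<^sup>2) - \<mu>\<^sup>2 * ?n x)"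
      using int1 intn by auto
    then show ?thesis by (simp add: algebra_simps)
  qed
  have int2': "integrable lborel (\<lambda>x. indicator {-A..A} x * ((x\<^sup>2 - \<sigma>\<^sup>2 - \<mu>\<^sup>2) * ?n x))"
    using integrable_mult_indicator[OF _ int2, of "{-A..A}"] by simp
  have "(\<integral>x. ?n x * HH \<sigma> \<tau> x \<partial>lborel) =
        (\<integral>x. indicator {-A..A} x * ((x\<^sup>2 - \<sigma>\<^sup>2 - \<mu>\<^sup>2) * ?n x) + \<mu>\<^sup>2 * (indicator {-A..A} x * ?n x) \<partial>lborel)"
    unfolding eqH by (intro Bochner_Integration.integral_cong) (auto simp: algebra_simps)
  also have "\<dots> = (\<integral>x. indicator {-A..A} x * ((x\<^sup>2 - \<sigma>\<^sup>2 - \<mu>\<^sup>2) * ?n x) \<partial>lborel) + \<mu>\<^sup>2 * P"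
    unfolding P_def using int2' intP by simp
  also have "\<dots> = - \<sigma>\<^sup>2 * (A + \<mu>) * ?n A + \<sigma>\<^sup>2 * (-A + \<mu>) * ?n (-A) + \<mu>\<^sup>2 * P"
    using FTC_part[OF s A0(1)] by simp
  also have "\<dots> = \<sigma>\<^sup>2 * ((\<mu>/\<sigma>)\<^sup>2 * P - FF a (\<mu>/\<sigma>))"
    unfolding A_def nd_scale[OF s] FF_def using s by (simp add: field_simps power2_eq_square)
  finally have val: "(\<integral>x. ?n x * HH \<sigma> \<tau> x \<partial>lborel) = \<sigma>\<^sup>2 * ((\<mu>/\<sigma>)\<^sup>2 * P - FF a (\<mu>/\<sigma>))" .
  have P0: "0 \<le> P" unfolding P_def by (intro Bochner_Integration.integral_nonneg) simp
  have P1: "P \<le> 1"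
  proof -
    have "P \<le> (\<integral>x. ?n x \<partial>lborel)" unfolding P_def
      using intP intn by (intro integral_mono) (auto simp: indicator_def)
    then show ?thesis using s by simp
  qed
  have P10: "1/10 \<le> P" if mu: "\<mu>\<^sup>2 \<le> \<sigma>\<^sup>2"
  proof -
    define c where "c = exp (-2) / (sqrt (2*pi) * \<sigma>)"
    have mu': "\<bar>\<mu>\<bar> \<le> \<sigma>" using mu s by (simp add: abs_le_square_iff[symmetric])
    have low: "indicator {-\<sigma>..\<sigma>} x * c \<le> indicator {-A..A} x * ?n x" for x
    proof (cases "x \<in> {-\<sigma>..\<sigma>}")
      case True
      then have xA: "x \<in> {-A..A}" using A0 by auto
      have "\<bar>x - \<mu>\<bar> \<le> 2 * \<sigma>" using True mu' by auto
      then have "\<bar>x - \<mu>\<bar> \<le> \<bar>2*\<sigma>\<bar>" using s by simp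
      then have "(x - \<mu>)\<^sup>2 \<le> (2*\<sigma>)\<^sup>2" by (simp only: abs_le_square_iff)
      then have "-2 \<le> -(x - \<mu>)\<^sup>2 / (2 * \<sigma>\<^sup>2)" using s by (simp add: field_simps power2_eq_square)
      then have "exp (-2) \<le> exp (-(x - \<mu>)\<^sup>2 / (2 * \<sigma>\<^sup>2))" by simp
      then have "c \<le> ?n x" unfolding c_def normal_density_def using s
        by (simp add: real_sqrt_mult divide_right_mono)
      then show ?thesis using True xA by simp
    qed (auto simp: indicator_def)
    have "(\<integral>x. indicator {-\<sigma>..\<sigma>} x * c \<partial>lborel) \<le> P" unfolding P_def
    proof (intro integral_mono intP low)
      have "integrable lborel (indicat_real {-\<sigma>..\<sigma>})"
        by (rule integrable_real_indicator) (auto simp: emeasure_lborel_Icc_eq)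
      then show "integrable lborel (\<lambda>x. indicator {-\<sigma>..\<sigma>} x * c)" by simp
    qed
    moreover have "(\<integral>x. indicator {-\<sigma>..\<sigma>} x * c \<partial>lborel) = 2 * exp (-2) / sqrt (2*pi)"
      using s by (simp add: c_def field_simps)
    moreover have "1/10 \<le> 2 * exp (-2) / sqrt (2*pi)"
    proof -
      have "sqrt (2*pi) * exp 2 \<le> 13/5 * (37/5)" using sqrt2pi exp2 by (intro mult_mono) auto
      then have "sqrt (2*pi) \<le> 20 * exp (-2)" by (simp add: exp_minus field_simps)
      then show ?thesis using sqrt2pi by (simp add: field_simps)
    qed
    ultimately show ?thesis by linarith
  qed
  show "\<exists>P. 0 \<le> P \<and> P \<le> 1 \<and> (\<mu>\<^sup>2 \<le> \<sigma>\<^sup>2 \<longrightarrow> 1/10 \<le> P) \<and>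
          (\<integral>x. normal_density \<mu> \<sigma> x * HH \<sigma> \<tau> x \<partial>lborel) = \<sigma>\<^sup>2 * ((\<mu>/\<sigma>)\<^sup>2 * P - FF (sqrt \<tau>) (\<mu>/\<sigma>))"
    using P0 P1 P10 val unfolding a_def by blast
  have Hlo: "- \<sigma>\<^sup>2 \<le> HH \<sigma> \<tau> x" for x by (simp add: HH_def)
  have Hhi: "HH \<sigma> \<tau> x \<le> \<sigma>\<^sup>2 * (\<tau> - 1)" for x using t s
    by (auto simp: HH_def algebra_simps)
  have "(\<integral>x. - \<sigma>\<^sup>2 * ?n x \<partial>lborel) \<le> (\<integral>x. ?n x * HH \<sigma> \<tau> x \<partial>lborel)"
  proof (intro integral_mono intH)
    show "integrable lborel (\<lambda>x. - \<sigma>\<^sup>2 * ?n x)" using intn by simp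
    fix x show "- \<sigma>\<^sup>2 * ?n x \<le> ?n x * HH \<sigma> \<tau> x"
      using mult_left_mono[OF Hlo[of x] normal_density_nonneg[of \<mu> \<sigma> x]] by (simp add: mult.commute)
  qed
  then show "- \<sigma>\<^sup>2 \<le> (\<integral>x. ?n x * HH \<sigma> \<tau> x \<partial>lborel)" using s by simp
  have "(\<integral>x. ?n x * HH \<sigma> \<tau> x \<partial>lborel) \<le> (\<integral>x. \<sigma>\<^sup>2 * (\<tau> - 1) * ?n x \<partial>lborel)"
  proof (intro integral_mono intH)
    show "integrable lborel (\<lambda>x. \<sigma>\<^sup>2 * (\<tau> - 1) * ?n x)" using intn by simp
    fix x show "?n x * HH \<sigma> \<tau> x \<le> \<sigma>\<^sup>2 * (\<tau> - 1) * ?n x"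
      using mult_left_mono[OF Hhi[of x] normal_density_nonneg[of \<mu> \<sigma> x]] by (simp add: mult.commute)
  qed
  then show "(\<integral>x. ?n x * HH \<sigma> \<tau> x \<partial>lborel) \<le> \<sigma>\<^sup>2 * (\<tau> - 1)" using s by simp
qed




lemma diff_bound:
  assumes s: "0 < \<sigma>" and t: "1 \<le> \<tau>"
  shows "\<bar>(\<integral>x. normal_density \<mu> \<sigma> x * HH \<sigma> \<tau> x \<partial>lborel) + \<sigma>\<^sup>2 * FF (sqrt \<tau>) 0\<bar>
          \<le> min (\<mu>\<^sup>2) (3 * \<sigma>\<^sup>2 * \<tau>)"
proof -
  define I where "I = (\<integral>x. normal_density \<mu> \<sigma> x * HH \<sigma> \<tau> x \<partial>lborel)"
  define a where "a = sqrt \<tau>"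
  define m where "m = \<mu> / \<sigma>"
  obtain P where P: "0 \<le> P" "P \<le> 1" "\<mu>\<^sup>2 \<le> \<sigma>\<^sup>2 \<longrightarrow> 1/10 \<le> P" "I = \<sigma>\<^sup>2 * (m\<^sup>2 * P - FF a m)"
    using trunc_int(2)[OF s t, of \<mu>] unfolding I_def a_def m_def by blast
  have Ib: "- \<sigma>\<^sup>2 \<le> I" "I \<le> \<sigma>\<^sup>2 * (\<tau> - 1)" using trunc_int(3,4)[OF s t, of \<mu>] unfolding I_def by auto
  have a1: "1 \<le> a" and a2: "a\<^sup>2 = \<tau>" using t by (auto simp: a_def)
  have s2: "0 < \<sigma>\<^sup>2" using s by simp
  define G where "G = I / \<sigma>\<^sup>2"
  have IG: "I = \<sigma>\<^sup>2 * G" using s2 by (simp add: G_def)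
  have mu: "\<mu>\<^sup>2 = \<sigma>\<^sup>2 * m\<^sup>2" using s by (simp add: m_def field_simps)
  have "\<bar>G + FF a 0\<bar> \<le> min (m\<^sup>2) (3 * a\<^sup>2)"
  proof (rule main_bound[OF a1 P(1,2)])
    show "m\<^sup>2 \<le> 1 \<Longrightarrow> 1/10 \<le> P" using P(3) mu s2 by (simp add: mult_le_cancel_left1)
    show "G = m\<^sup>2 * P - FF a m" using P(4) IG s2 by simp
    have "\<sigma>\<^sup>2 * (-1) \<le> \<sigma>\<^sup>2 * G" using Ib IG by simp
    then show "-1 \<le> G" using mult_le_cancel_left_pos[OF s2] by blast
    show "G \<le> a\<^sup>2 - 1" using Ib IG s2 a2 by (simp add: mult_le_cancel_left)
  qed
  then have "\<sigma>\<^sup>2 * \<bar>G + FF a 0\<bar> \<le> \<sigma>\<^sup>2 * min (m\<^sup>2) (3 * a\<^sup>2)" using s2 by (intro mult_left_mono) auto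
  moreover have "\<sigma>\<^sup>2 * \<bar>G + FF a 0\<bar> = \<bar>I + \<sigma>\<^sup>2 * FF a 0\<bar>"
  proof -
    have "I + \<sigma>\<^sup>2 * FF a 0 = \<sigma>\<^sup>2 * (G + FF a 0)" using IG by (simp add: algebra_simps)
    then show ?thesis by (simp only: abs_mult) simp
  qed
  moreover have "\<sigma>\<^sup>2 * min (m\<^sup>2) (3 * a\<^sup>2) = min (\<mu>\<^sup>2) (3 * \<sigma>\<^sup>2 * \<tau>)"
    using s2 mu a2 by (simp add: min_mult_distrib_left)
  ultimately show ?thesis unfolding I_def a_def by simp
qed

lemma zero_val:
  assumes s: "0 < \<sigma>" and t: "1 \<le> \<tau>"
  shows "(\<integral>x. normal_density 0 \<sigma> x * HH \<sigma> \<tau> x \<partial>lborel) = - \<sigma>\<^sup>2 * FF (sqrt \<tau>) 0"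
  using trunc_int(2)[OF s t, of 0] by auto

lemma prod_lborel:
  fixes f g :: "real \<Rightarrow> real"
  assumes f: "integrable lborel f" and g: "integrable lborel g"
  shows "integrable (lborel \<Otimes>\<^sub>M lborel) (\<lambda>z. f (fst z) * g (snd z))"
    and "(\<integral>z. f (fst z) * g (snd z) \<partial>(lborel \<Otimes>\<^sub>M lborel)) = (\<integral>x. f x \<partial>lborel) * (\<integral>x. g x \<partial>lborel)"
proof -
  have [measurable]: "f \<in> borel_measurable lborel" "g \<in> borel_measurable lborel"
    using f g by (auto dest: borel_measurable_integrable)
  show int: "integrable (lborel \<Otimes>\<^sub>M lborel) (\<lambda>z. f (fst z) * g (snd z))"
  proof (rule lborel_pair.Fubini_integrable)
    show "(\<lambda>z. f (fst z) * g (snd z)) \<in> borel_measurable (lborel \<Otimes>\<^sub>M lborel)" by measurable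
    have "(\<lambda>x. \<integral>y. norm (f (fst (x, y)) * g (snd (x, y))) \<partial>lborel) = (\<lambda>x. \<bar>f x\<bar> * (\<integral>y. \<bar>g y\<bar> \<partial>lborel))"
      by (simp add: abs_mult)
    moreover have "integrable lborel (\<lambda>x. \<bar>f x\<bar> * (\<integral>y. \<bar>g y\<bar> \<partial>lborel))"
      using f by (intro integrable_mult_left integrable_abs)
    ultimately show "integrable lborel (\<lambda>x. \<integral>y. norm (f (fst (x, y)) * g (snd (x, y))) \<partial>lborel)" by simp
    show "AE x in lborel. integrable lborel (\<lambda>y. f (fst (x, y)) * g (snd (x, y)))"
      using g by simp
  qed
  have "(\<integral>x. (\<integral>y. f x * g y \<partial>lborel) \<partial>lborel) = integral\<^sup>L (lborel \<Otimes>\<^sub>M lborel) (\<lambda>(x, y). f x * g y)"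
    using int by (intro lborel_pair.integral_fst) (simp add: split_beta')
  then show "(\<integral>z. f (fst z) * g (snd z) \<partial>(lborel \<Otimes>\<^sub>M lborel)) = (\<integral>x. f x \<partial>lborel) * (\<integral>x. g x \<partial>lborel)"
    by (simp add: split_beta')
qed




lemma final_alg:
  fixes c dm dt A B :: real
  assumes "0 \<le> c" "\<bar>dm\<bar> \<le> A" "\<bar>dt\<bar> \<le> B"
  shows "\<bar>c*dm + c*dt - dm*dt\<bar> \<le> A*B + c*A + c*B"
proof -
  have "\<bar>c*dm\<bar> \<le> c*A" using assms by (simp add: abs_mult mult_left_mono)
  moreover have "\<bar>c*dt\<bar> \<le> c*B" using assms by (simp add: abs_mult mult_left_mono)
  moreover have "\<bar>dm*dt\<bar> \<le> A*B" unfolding abs_mult using assms by (intro mult_mono) auto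
  ultimately show ?thesis by (smt (verit))
qed

theorem lemma3:
  fixes M :: "'a measure" and X Y :: "'a \<Rightarrow> real" and \<mu> \<theta> \<sigma> \<tau> :: real
  assumes "prob_space M"
    and "distributed M lborel X (\<lambda>x. ennreal (normal_density \<mu> \<sigma> x))"
    and "distributed M lborel Y (\<lambda>y. ennreal (normal_density \<theta> \<sigma> y))"
    and "prob_space.indep_var M borel X borel Y"
    and "\<sigma> > 0" and "\<tau> \<ge> 1"
  shows "eta \<sigma> \<tau> = - 4 * \<sigma> ^ 4 * \<tau> * (std_normal_density (sqrt \<tau>))\<^sup>2 \<and>
         \<bar>(\<integral>\<omega>. prod_trunc \<sigma> \<tau> (X \<omega>) (Y \<omega>) \<partial>M) - eta \<sigma> \<tau> - \<mu>\<^sup>2 * \<theta>\<^sup>2\<bar>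
         \<le> min (\<mu>\<^sup>2) (3 * \<sigma>\<^sup>2 * \<tau>) * min (\<theta>\<^sup>2) (3 * \<sigma>\<^sup>2 * \<tau>)
           + 2 * \<sigma>\<^sup>2 * sqrt \<tau> * std_normal_density (sqrt \<tau>) * min (\<mu>\<^sup>2) (3 * \<sigma>\<^sup>2 * \<tau>)
           + 2 * \<sigma>\<^sup>2 * sqrt \<tau> * std_normal_density (sqrt \<tau>) * min (\<theta>\<^sup>2) (3 * \<sigma>\<^sup>2 * \<tau>)"
proof -
  interpret prob_space M by fact
  have s: "0 < \<sigma>" and t: "1 \<le> \<tau>" using assms by auto
  define q where "q x = x\<^sup>2 - \<sigma>\<^sup>2" for x :: real
  let ?H = "HH \<sigma> \<tau>"
  have qm[measurable]: "q \<in> borel_measurable borel" unfolding q_def by measurable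
  have Hm[measurable]: "?H \<in> borel_measurable borel" unfolding HH_def by measurable
  have pt: "prod_trunc \<sigma> \<tau> x y = q x * q y - ?H x * ?H y" for x y
    by (auto simp: prod_trunc_def HH_def q_def max_def)
  define c where "c = \<sigma>\<^sup>2 * FF (sqrt \<tau>) 0"
  have c_eq: "c = 2 * \<sigma>\<^sup>2 * sqrt \<tau> * std_normal_density (sqrt \<tau>)"
    using FF0(1)[of "sqrt \<tau>"] t by (simp add: c_def std_ph)
  have c0: "0 \<le> c" using FF0(2)[of "sqrt \<tau>"] t by (simp add: c_def)
  have mom: "has_bochner_integral lborel (\<lambda>x. normal_density m \<sigma> x * q x) (m\<^sup>2)" for m
    using second_moment[OF s, of m] by (simp add: q_def)
  have intq: "integrable lborel (\<lambda>x. normal_density m \<sigma> x * q x)" for m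
    using integrable.intros[OF mom] .
  have valq: "(\<integral>x. normal_density m \<sigma> x * q x \<partial>lborel) = m\<^sup>2" for m
    using has_bochner_integral_integral_eq[OF mom] .
  have intH: "integrable lborel (\<lambda>x. normal_density m \<sigma> x * ?H x)" for m
    using trunc_int(1)[OF s t] .
  have eta_eq: "eta \<sigma> \<tau> = - c\<^sup>2"
  proof -
    let ?n = "normal_density 0 \<sigma>"
    have "eta \<sigma> \<tau> = (\<integral>z. (?n (fst z) * q (fst z)) * (?n (snd z) * q (snd z))
                          - (?n (fst z) * ?H (fst z)) * (?n (snd z) * ?H (snd z)) \<partial>(lborel \<Otimes>\<^sub>M lborel))"
      unfolding eta_def pt by (intro Bochner_Integration.integral_cong) (auto simp: algebra_simps)
    also have "\<dots> = (\<integral>x. ?n x * q x \<partial>lborel) * (\<integral>x. ?n x * q x \<partial>lborel)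
                   - (\<integral>x. ?n x * ?H x \<partial>lborel) * (\<integral>x. ?n x * ?H x \<partial>lborel)"
      by (subst Bochner_Integration.integral_diff)
         (auto intro!: prod_lborel intq intH simp: prod_lborel(2)[OF intq intq] prod_lborel(2)[OF intH intH])
    also have "\<dots> = - c\<^sup>2" using zero_val[OF s t] valq[of 0] by (simp add: c_def power2_eq_square)
    finally show ?thesis .
  qed
  have eta_val: "eta \<sigma> \<tau> = - 4 * \<sigma> ^ 4 * \<tau> * (std_normal_density (sqrt \<tau>))\<^sup>2"
    unfolding eta_eq c_eq using t by (simp add: power2_eq_square power4_eq_xxxx)
  have dX: "distributed M lborel X (\<lambda>x. ennreal (normal_density \<mu> \<sigma> x))" by fact
  have dY: "distributed M lborel Y (\<lambda>x. ennreal (normal_density \<theta> \<sigma> x))" by fact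
  have ind: "indep_var borel X borel Y" using assms(4) .
  have iqX: "integrable M (\<lambda>\<omega>. q (X \<omega>))"
    using distributed_integrable[OF dX, of q] intq by simp
  have iqY: "integrable M (\<lambda>\<omega>. q (Y \<omega>))"
    using distributed_integrable[OF dY, of q] intq by simp
  have iHX: "integrable M (\<lambda>\<omega>. ?H (X \<omega>))"
    using distributed_integrable[OF dX, of ?H] intH by simp
  have iHY: "integrable M (\<lambda>\<omega>. ?H (Y \<omega>))"
    using distributed_integrable[OF dY, of ?H] intH by simp
  have EqX: "(\<integral>\<omega>. q (X \<omega>) \<partial>M) = \<mu>\<^sup>2"
    using distributed_integral[OF dX, of q] valq by simp
  have EqY: "(\<integral>\<omega>. q (Y \<omega>) \<partial>M) = \<theta>\<^sup>2"
    using distributed_integral[OF dY, of q] valq by simp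
  have EHX: "(\<integral>\<omega>. ?H (X \<omega>) \<partial>M) = (\<integral>x. normal_density \<mu> \<sigma> x * ?H x \<partial>lborel)"
    using distributed_integral[OF dX, of ?H] by simp
  have EHY: "(\<integral>\<omega>. ?H (Y \<omega>) \<partial>M) = (\<integral>x. normal_density \<theta> \<sigma> x * ?H x \<partial>lborel)"
    using distributed_integral[OF dY, of ?H] by simp
  have indq: "indep_var borel (q \<circ> X) borel (q \<circ> Y)" using indep_var_compose[OF ind qm qm] .
  have indH: "indep_var borel (?H \<circ> X) borel (?H \<circ> Y)" using indep_var_compose[OF ind Hm Hm] .
  have Eqq: "(\<integral>\<omega>. q (X \<omega>) * q (Y \<omega>) \<partial>M) = \<mu>\<^sup>2 * \<theta>\<^sup>2"
    using indep_var_lebesgue_integral[OF indq] iqX iqY EqX EqY by (simp add: o_def)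
  have iqq: "integrable M (\<lambda>\<omega>. q (X \<omega>) * q (Y \<omega>))"
    using indep_var_integrable[OF indq] iqX iqY by (simp add: o_def)
  have EHH: "(\<integral>\<omega>. ?H (X \<omega>) * ?H (Y \<omega>) \<partial>M) = (\<integral>\<omega>. ?H (X \<omega>) \<partial>M) * (\<integral>\<omega>. ?H (Y \<omega>) \<partial>M)"
    using indep_var_lebesgue_integral[OF indH] iHX iHY by (simp add: o_def)
  have iHH: "integrable M (\<lambda>\<omega>. ?H (X \<omega>) * ?H (Y \<omega>))"
    using indep_var_integrable[OF indH] iHX iHY by (simp add: o_def)
  define IX where "IX = (\<integral>x. normal_density \<mu> \<sigma> x * ?H x \<partial>lborel)"
  define IY where "IY = (\<integral>x. normal_density \<theta> \<sigma> x * ?H x \<partial>lborel)"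
  have E: "(\<integral>\<omega>. prod_trunc \<sigma> \<tau> (X \<omega>) (Y \<omega>) \<partial>M) = \<mu>\<^sup>2 * \<theta>\<^sup>2 - IX * IY"
    unfolding pt using iqq iHH Eqq EHH EHX EHY by (simp add: IX_def IY_def)
  have bX: "\<bar>IX + c\<bar> \<le> min (\<mu>\<^sup>2) (3 * \<sigma>\<^sup>2 * \<tau>)" using diff_bound[OF s t, of \<mu>] by (simp add: IX_def c_def)
  have bY: "\<bar>IY + c\<bar> \<le> min (\<theta>\<^sup>2) (3 * \<sigma>\<^sup>2 * \<tau>)" using diff_bound[OF s t, of \<theta>] by (simp add: IY_def c_def)
  have "\<mu>\<^sup>2 * \<theta>\<^sup>2 - IX * IY - (- c\<^sup>2) - \<mu>\<^sup>2 * \<theta>\<^sup>2 = c * (IX + c) + c * (IY + c) - (IX + c) * (IY + c)"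
    by (simp add: algebra_simps power2_eq_square)
  then have "\<bar>(\<integral>\<omega>. prod_trunc \<sigma> \<tau> (X \<omega>) (Y \<omega>) \<partial>M) - eta \<sigma> \<tau> - \<mu>\<^sup>2 * \<theta>\<^sup>2\<bar>
     \<le> min (\<mu>\<^sup>2) (3 * \<sigma>\<^sup>2 * \<tau>) * min (\<theta>\<^sup>2) (3 * \<sigma>\<^sup>2 * \<tau>) + c * min (\<mu>\<^sup>2) (3 * \<sigma>\<^sup>2 * \<tau>) + c * min (\<theta>\<^sup>2) (3 * \<sigma>\<^sup>2 * \<tau>)"
    unfolding E eta_eq using final_alg[OF c0 bX bY] by simp
  then show ?thesis using eta_val unfolding c_eq by simp
qed


end
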